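(* Let $N\ge1$, $\chi_1,\dots,\chi_N\in\mathbb{C}$, and let $\Psi(x_1,\dots,x_N;t_1,\dots,t_N)$ be a holomorphic function on an open domain satisfying $$\sum_{i=1}^N(-2x_i\partial_{x_i}+2\chi_i)\Psi=0,\qquad \sum_{i=1}^N\partial_{x_i}\Psi=0,\qquad \sum_{i=1}^N(-x_i^2\partial_{x_i}+2\chi_ix_i)\Psi=0.$$ Define, on an open simply connected domain of $(x_1,\dots,x_{N+1};t_1,\dots,t_{N+1})$ where $x_i\neq x_{N+1}$, $t_i\neq t_{N+1}$ and $\xi_i=-\frac{t_i-t_{N+1}}{x_i-x_{N+1}}$ stays in the domain of $\Psi$ (with fixed branches of the powers), $$\Upsilon=\prod_{i=1}^N\left(\frac{(x_i-x_{N+1})^2}{t_i-t_{N+1}}\right)^{\chi_i}\Psi(\xi_1,\dots,\xi_N;t_1,\dots,t_N).$$ Then, with $\chi_{N+1}=k/2$ for an arbitrary $k\in\mathbb{C}$, $$\sum_{i=1}^{N+1}\partial_{x_i}\Upsilon=0,\qquad\sum_{i=1}^{N+1}t_i\partial_{x_i}\Upsilon=0,\qquad\sum_{i=1}^{N+1}(-2x_i\partial_{x_i}+2\chi_i)\Upsilon-k\Upsilon=0.$$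
   Context: These are the invariance (Ward) identities for $\mathrm{PGL}_2(\mathbb{C})$ conformal blocks on $\mathbb{P}^1$ with parabolic structures: $x_i$ are coordinates on the big cell of the flag variety at the $i$-th marked point $t_i$, and $e,h,f\in\mathfrak{sl}_2$ act at point $i$ by $\partial_{x_i}$, $-2x_i\partial_{x_i}+2\chi_i$, $-x_i^2\partial_{x_i}+2\chi_ix_i$. The functions are treated as holomorphic functions of all variables; $\partial_{x_i}$ in the identities for $\Upsilon$ denotes partial derivative in the variables $(x_1,\dots,x_{N+1},t_1,\dots,t_{N+1})$. *)

theory Defs
  imports "HOL-Analysis.Analysis"
begin

text \<open>For the domain of Psi we use the index type ('n + 'n): coordinate Inl i is x_i,
  coordinate Inr i is t_i (i ranges over 'n, a finite type with N elements).
  For the domain of Upsilon we use ('n option + 'n option): Some i is the index i,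
  None is the extra index N+1.\<close>

definition cscale :: "complex \<Rightarrow> complex ^ 'i \<Rightarrow> complex ^ 'i" where
  "cscale c v = (\<chi> j. c * v $ j)"

definition cholomorphic_on :: "(complex ^ 'i \<Rightarrow> complex) \<Rightarrow> (complex ^ 'i) set \<Rightarrow> bool" where
  "cholomorphic_on f U \<longleftrightarrow> open U \<and>
     (\<forall>z\<in>U. \<exists>L. (f has_derivative L) (at z) \<and> (\<forall>c v. L (cscale c v) = c * L v))"

definition vupd :: "complex ^ 'i \<Rightarrow> 'i \<Rightarrow> complex \<Rightarrow> complex ^ 'i" where
  "vupd z j w = (\<chi> k. if k = j then w else z $ k)"

definition partial :: "(complex ^ 'i \<Rightarrow> complex) \<Rightarrow> 'i \<Rightarrow> complex ^ 'i \<Rightarrow> complex" where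
  "partial f j z = deriv (\<lambda>w. f (vupd z j w)) (z $ j)"

definition xi_map :: "complex ^ ('n::finite option + 'n option) \<Rightarrow> complex ^ ('n + 'n)" where
  "xi_map z = (\<chi> a. case a of
       Inl i \<Rightarrow> - (z $ Inr (Some i) - z $ Inr None) / (z $ Inl (Some i) - z $ Inl None)
     | Inr i \<Rightarrow> z $ Inr (Some i))"

definition pow_base :: "'n::finite \<Rightarrow> complex ^ ('n option + 'n option) \<Rightarrow> complex" where
  "pow_base i z = ((z $ Inl (Some i) - z $ Inl None) ^ 2) / (z $ Inr (Some i) - z $ Inr None)"

text \<open>Upsilon, with the branch of the power w^chi_i fixed as exp(chi_i * Lg_i) where
  Lg_i is a holomorphic branch of log of pow_base i.\<close>
definition Upsilon :: "('n::finite \<Rightarrow> complex) \<Rightarrow> ('n \<Rightarrow> complex ^ ('n option + 'n option) \<Rightarrow> complex)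
    \<Rightarrow> (complex ^ ('n + 'n) \<Rightarrow> complex) \<Rightarrow> complex ^ ('n option + 'n option) \<Rightarrow> complex" where
  "Upsilon chi Lg \<Psi> z = (\<Prod>i\<in>UNIV. exp (chi i * Lg i z)) * \<Psi> (xi_map z)"

end

theory Submission
  imports Defs
begin


lemma bl_axis: "bounded_linear (axis k :: complex \<Rightarrow> complex^'i::finite)"
proof (rule bounded_linear_intro[where K=1])
  fix x y :: complex and r :: real
  show "axis k (x + y) = (axis k x + axis k y :: complex^'i)" by (simp add: vec_eq_iff axis_def)
  show "axis k (r *\<^sub>R x) = (r *\<^sub>R axis k x :: complex^'i)" by (simp add: vec_eq_iff axis_def)
  have "norm (axis k x :: complex^'i) \<le> (\<Sum>i\<in>UNIV. norm ((axis k x :: complex^'i) $ i))"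
    unfolding norm_vec_def by (rule L2_set_le_sum) simp
  also have "\<dots> = (\<Sum>i\<in>UNIV. if i = k then norm x else 0)"
    by (rule sum.cong) (auto simp: axis_def)
  also have "\<dots> = norm x" by simp
  finally show "norm (axis k x :: complex^'i) \<le> norm x * 1" by simp
qed

lemma vec_deriv:
  fixes \<gamma> :: "complex \<Rightarrow> complex^'i::finite"
  assumes "\<And>k. ((\<lambda>w. \<gamma> w $ k) has_field_derivative u $ k) (at w0)"
  shows "(\<gamma> has_derivative (\<lambda>h. cscale h u)) (at w0)"
proof -
  have eq: "\<gamma> = (\<lambda>w. \<Sum>k\<in>UNIV. axis k (\<gamma> w $ k))"
    by (rule ext) (simp add: vec_eq_iff axis_def)
  have "((\<lambda>w. \<Sum>k\<in>UNIV. axis k (\<gamma> w $ k)) has_derivative (\<lambda>h. \<Sum>k\<in>UNIV. axis k (u $ k * h))) (at w0)"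
    apply (rule has_derivative_sum)
    using bounded_linear.has_derivative[OF bl_axis assms[unfolded has_field_derivative_def]] by blast
  moreover have "(\<lambda>h. \<Sum>k\<in>UNIV. axis k (u $ k * h)) = (\<lambda>h. cscale h u)"
    by (rule ext) (simp add: vec_eq_iff axis_def cscale_def mult.commute)
  ultimately show ?thesis using eq by simp
qed

lemma path_deriv:
  assumes "(f has_derivative L) (at (\<gamma> w0))" "(\<gamma> has_derivative (\<lambda>h. cscale h v)) (at w0)"
    "\<forall>c v. L (cscale c v) = c * L v"
  shows "((\<lambda>w. f (\<gamma> w)) has_field_derivative L v) (at w0)"
proof -
  have "((\<lambda>w. f (\<gamma> w)) has_derivative (\<lambda>h. L (cscale h v))) (at w0)"
    using has_derivative_compose[OF assms(2) assms(1)] by (simp add: o_def)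
  moreover have "(\<lambda>h. L (cscale h v)) = (*) (L v)" using assms(3) by (auto simp: mult.commute)
  ultimately show ?thesis by (simp add: has_field_derivative_def)
qed

lemma clin_expand:
  assumes "bounded_linear L" "\<forall>c v. L (cscale c v) = c * L v"
  shows "L v = (\<Sum>a\<in>UNIV. v $ a * L (axis a 1))"
proof -
  have "v = (\<Sum>a\<in>UNIV. cscale (v $ a) (axis a 1))"
  proof -
    have "\<And>i. (\<Sum>x\<in>UNIV. v $ x * (if i = x then 1 else 0)) = (\<Sum>x\<in>UNIV. if i = x then v$x else 0)"
      by (rule sum.cong) auto
    then show ?thesis by (simp add: vec_eq_iff cscale_def axis_def)
  qed
  then have "L v = L (\<Sum>a\<in>UNIV. cscale (v $ a) (axis a 1))" by (rule arg_cong)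
  also have "\<dots> = (\<Sum>a\<in>UNIV. L (cscale (v $ a) (axis a 1)))"
    using linear_sum[OF bounded_linear.linear[OF assms(1)]] by (simp add: o_def)
  finally have "L v = (\<Sum>a\<in>UNIV. L (cscale (v $ a) (axis a 1)))" .
  then show ?thesis using assms(2) by simp
qed

lemma vupd_deriv: "(vupd z j has_derivative (\<lambda>h. cscale h (axis j 1))) (at w0)"
  apply (rule vec_deriv)
  by (simp add: vupd_def axis_def)

lemma partial_eq:
  assumes "(f has_derivative L) (at z)" "\<forall>c v. L (cscale c v) = c * L v"
  shows "partial f a z = L (axis a 1)"
proof -
  have z: "vupd z a (z $ a) = z" by (simp add: vupd_def vec_eq_iff)
  have "((\<lambda>w. f (vupd z a w)) has_field_derivative L (axis a 1)) (at (z $ a))"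
    apply (rule path_deriv[OF _ vupd_deriv assms(2)]) using assms(1) z by simp
  then show ?thesis unfolding partial_def by (rule DERIV_imp_deriv)
qed

lemma sum_option: "(\<Sum>j\<in>UNIV. f j) = f None + (\<Sum>i\<in>(UNIV::'n::finite set). f (Some i))"
proof -
  have "sum f (UNIV :: 'n option set) = f None + sum f (range Some)"
    by (subst UNIV_option_conv) simp
  also have "sum f (range Some) = (\<Sum>i\<in>(UNIV::'n::finite set). f (Some i))"
    by (simp add: sum.reindex)
  finally show ?thesis .
qed

lemma sum_plus: "(\<Sum>j\<in>UNIV. f j) = (\<Sum>i\<in>(UNIV::'a::finite set). f (Inl i)) + (\<Sum>i\<in>(UNIV::'b::finite set). f (Inr i))"
  using sum.Plus[of "UNIV::'a set" "UNIV::'b set" f] by (simp add: o_def)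



lemma ups_deriv:
  fixes \<gamma> :: "complex \<Rightarrow> complex^('n::finite option + 'n option)"
  assumes holo: "cholomorphic_on \<Psi> D" and xD: "xi_map (\<gamma> w0) \<in> D"
  and xd: "((\<lambda>w. xi_map (\<gamma> w)) has_derivative (\<lambda>h. cscale h u)) (at w0)"
  and ld: "\<And>i. ((\<lambda>w. Lg i (\<gamma> w)) has_field_derivative DL i) (at w0)"
  shows "((\<lambda>w. Upsilon chi Lg \<Psi> (\<gamma> w)) has_field_derivative
     (\<Sum>i\<in>UNIV. chi i * DL i) * Upsilon chi Lg \<Psi> (\<gamma> w0)
     + (\<Prod>i\<in>UNIV. exp (chi i * Lg i (\<gamma> w0))) * (\<Sum>a\<in>UNIV. u $ a * partial \<Psi> a (xi_map (\<gamma> w0)))) (at w0)"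
proof -
  from holo xD obtain L where L: "(\<Psi> has_derivative L) (at (xi_map (\<gamma> w0)))" "\<forall>c v. L (cscale c v) = c * L v"
    unfolding cholomorphic_on_def by blast
  have p: "((\<lambda>w. \<Psi> (xi_map (\<gamma> w))) has_field_derivative L u) (at w0)"
    using path_deriv[of \<Psi> L "\<lambda>w. xi_map (\<gamma> w)" w0 u] L xd by simp
  have Lu: "L u = (\<Sum>a\<in>UNIV. u $ a * partial \<Psi> a (xi_map (\<gamma> w0)))"
    using clin_expand[OF has_derivative_bounded_linear[OF L(1)] L(2), of u] partial_eq[OF L] by simp
  define S where "S w = (\<Sum>i\<in>UNIV. chi i * Lg i (\<gamma> w))" for w
  have s: "(S has_field_derivative (\<Sum>i\<in>UNIV. chi i * DL i)) (at w0)"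
    unfolding S_def by (rule DERIV_sum) (rule DERIV_cmult[OF ld])
  have e: "((\<lambda>w. exp (S w)) has_field_derivative exp (S w0) * (\<Sum>i\<in>UNIV. chi i * DL i)) (at w0)"
    by (rule DERIV_fun_exp[OF s])
  have U: "\<And>w. Upsilon chi Lg \<Psi> (\<gamma> w) = exp (S w) * \<Psi> (xi_map (\<gamma> w))"
    by (simp add: Upsilon_def exp_sum S_def)
  have pr: "(\<Prod>i\<in>UNIV. exp (chi i * Lg i (\<gamma> w0))) = exp (S w0)" by (simp add: S_def exp_sum)
  have "((\<lambda>w. exp (S w) * \<Psi> (xi_map (\<gamma> w))) has_field_derivative
      exp (S w0) * (\<Sum>i\<in>UNIV. chi i * DL i) * \<Psi> (xi_map (\<gamma> w0)) + L u * exp (S w0)) (at w0)"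
    by (rule DERIV_mult[OF e p])
  then show ?thesis unfolding U pr Lu[symmetric] by (rule DERIV_cong) (simp add: mult_ac add_ac)
qed

lemma lg_deriv:
  assumes ld: "((\<lambda>w. Lg (\<gamma> w)) has_field_derivative D) (at w0)"
   and pd: "((\<lambda>w. pb (\<gamma> w)) has_field_derivative P') (at w0)"
   and ev: "eventually (\<lambda>w. exp (Lg (\<gamma> w)) = pb (\<gamma> w)) (nhds w0)"
   and nz: "pb (\<gamma> w0) \<noteq> 0"
  shows "D = P' / pb (\<gamma> w0)"
proof -
  have "((\<lambda>w. exp (Lg (\<gamma> w))) has_field_derivative exp (Lg (\<gamma> w0)) * D) (at w0)"
    by (auto intro!: derivative_eq_intros ld)
  moreover have "exp (Lg (\<gamma> w0)) = pb (\<gamma> w0)" using ev eventually_nhds_x_imp_x by blast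
  ultimately have "((\<lambda>w. pb (\<gamma> w)) has_field_derivative pb (\<gamma> w0) * D) (at w0)"
    using DERIV_cong_ev[OF refl ev refl] by simp
  then have "pb (\<gamma> w0) * D = P'" using DERIV_unique pd by blast
  with nz show ?thesis by (simp add: field_simps)
qed

lemma vupd_ev:
  assumes "open U" "z \<in> U"
  shows "eventually (\<lambda>w. vupd z j w \<in> U) (nhds (z $ j))"
proof -
  have z: "vupd z j (z $ j) = z" by (simp add: vupd_def vec_eq_iff)
  have "isCont (vupd z j) (z $ j)"
    using has_derivative_continuous[OF vupd_deriv] by blast
  then have "(vupd z j \<longlongrightarrow> z) (nhds (z $ j))"
    using z tendsto_at_iff_tendsto_nhds[of "vupd z j" "z $ j"] unfolding isCont_def by simp
  then show ?thesis using topological_tendstoD assms by blast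
qed

lemma lg_path:
  assumes h: "cholomorphic_on g U" and z: "z \<in> U" and br: "\<forall>z\<in>U. exp (g z) = pb z"
    and pd: "((\<lambda>w. pb (vupd z j w)) has_field_derivative P') (at (z $ j))"
    and nz: "pb z \<noteq> 0"
  shows "((\<lambda>w. g (vupd z j w)) has_field_derivative P' / pb z) (at (z $ j))"
proof -
  have zz: "vupd z j (z $ j) = z" by (simp add: vupd_def vec_eq_iff)
  from h z obtain L where L: "(g has_derivative L) (at z)" "\<forall>c v. L (cscale c v) = c * L v"
    unfolding cholomorphic_on_def by blast
  have d: "((\<lambda>w. g (vupd z j w)) has_field_derivative L (axis j 1)) (at (z $ j))"
    by (rule path_deriv[OF _ vupd_deriv L(2)]) (simp add: zz L(1))
  have ev: "eventually (\<lambda>w. exp (g (vupd z j w)) = pb (vupd z j w)) (nhds (z $ j))"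
  proof -
    have "open U" using h unfolding cholomorphic_on_def by blast
    then have "eventually (\<lambda>w. vupd z j w \<in> U) (nhds (z $ j))" using vupd_ev z by blast
    then show ?thesis by (rule eventually_mono) (simp add: br)
  qed
  have "L (axis j 1) = P' / pb (vupd z j (z $ j))"
    using lg_deriv[of g "vupd z j" "L (axis j 1)" "z $ j" pb P', OF d pd ev] zz nz by simp
  then show ?thesis using d zz by simp
qed

lemma ups_partial:
  fixes z :: "complex^('n::finite option + 'n option)"
  assumes holo: "cholomorphic_on \<Psi> D" and xD: "xi_map z \<in> D" and z: "z \<in> U"
  and Lh: "\<forall>i. cholomorphic_on (Lg i) U" and br: "\<forall>i. \<forall>z\<in>U. exp (Lg i z) = pow_base i z"
  and xd: "((\<lambda>w. xi_map (vupd z j w)) has_derivative (\<lambda>h. cscale h u)) (at (z $ j))"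
  and pd: "\<And>i. ((\<lambda>w. pow_base i (vupd z j w)) has_field_derivative P' i) (at (z $ j))"
  and nz: "\<forall>i. pow_base i z \<noteq> 0"
  shows "partial (Upsilon chi Lg \<Psi>) j z =
     (\<Sum>i\<in>UNIV. chi i * (P' i / pow_base i z)) * Upsilon chi Lg \<Psi> z
     + (\<Prod>i\<in>UNIV. exp (chi i * Lg i z)) * (\<Sum>a\<in>UNIV. u $ a * partial \<Psi> a (xi_map z))"
proof -
  have zz: "vupd z j (z $ j) = z" by (simp add: vupd_def vec_eq_iff)
  have "((\<lambda>w. Upsilon chi Lg \<Psi> (vupd z j w)) has_field_derivative
     (\<Sum>i\<in>UNIV. chi i * (P' i / pow_base i z)) * Upsilon chi Lg \<Psi> (vupd z j (z $ j))
     + (\<Prod>i\<in>UNIV. exp (chi i * Lg i (vupd z j (z $ j)))) * (\<Sum>a\<in>UNIV. u $ a * partial \<Psi> a (xi_map (vupd z j (z $ j))))) (at (z $ j))"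
    apply (rule ups_deriv[OF holo _ xd])
    using xD zz apply simp
    using lg_path[OF _ z _ pd] Lh br nz by blast
  then show ?thesis unfolding partial_def zz by (rule DERIV_imp_deriv)
qed



lemma d1: "(x::complex) \<noteq> x0 \<Longrightarrow> ((\<lambda>w. - c / (w - x0)) has_field_derivative c / (x - x0)^2) (at x)"
  apply (rule derivative_eq_intros refl)+
  apply (auto simp: power2_eq_square field_simps)
  done
lemma d2: "(x::complex) \<noteq> x0 \<Longrightarrow> ((\<lambda>w. - c / (x - w)) has_field_derivative - c / (x - x0)^2) (at x0)"
  apply (rule derivative_eq_intros refl)+
  apply (auto simp: power2_eq_square field_simps)
  done
lemma d3: "(e::complex) \<noteq> 0 \<Longrightarrow> ((\<lambda>w. (w - x0)^2 / e) has_field_derivative 2 * (x - x0) / e) (at x)"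
  apply (rule derivative_eq_intros refl)+
  apply (auto simp: power2_eq_square field_simps)
  done
lemma d4: "(e::complex) \<noteq> 0 \<Longrightarrow> ((\<lambda>w. (x - w)^2 / e) has_field_derivative - 2 * (x - x0) / e) (at x0)"
  apply (rule derivative_eq_intros refl)+
  apply (auto simp: power2_eq_square field_simps)
  done

lemma xi_some_deriv:
  fixes z :: "complex^('n::finite option + 'n option)"
  assumes nz: "z $ Inl (Some m) \<noteq> z $ Inl None"
  shows "((\<lambda>w. xi_map (vupd z (Inl (Some m)) w)) has_derivative
    (\<lambda>h. cscale h (axis (Inl m) ((z $ Inr (Some m) - z $ Inr None) / (z $ Inl (Some m) - z $ Inl None)^2))))
    (at (z $ Inl (Some m)))"
proof (rule vec_deriv)
  fix b :: "'n + 'n"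
  show "((\<lambda>w. xi_map (vupd z (Inl (Some m)) w) $ b) has_field_derivative
     axis (Inl m) ((z $ Inr (Some m) - z $ Inr None) / (z $ Inl (Some m) - z $ Inl None)^2) $ b)
    (at (z $ Inl (Some m)))"
  proof (cases b)
    case (Inl i)
    show ?thesis
    proof (cases "i = m")
      case True
      then show ?thesis using Inl d1[OF nz, of "z $ Inr (Some m) - z $ Inr None"]
        by (simp add: xi_map_def vupd_def axis_def)
    next
      case False
      then show ?thesis using Inl by (simp add: xi_map_def vupd_def axis_def)
    qed
  next
    case (Inr i)
    then show ?thesis by (simp add: xi_map_def vupd_def axis_def)
  qed
qed

lemma pb_some_deriv:
  fixes z :: "complex^('n::finite option + 'n option)"
  assumes "z $ Inr (Some i) - z $ Inr None \<noteq> 0"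
  shows "((\<lambda>w. pow_base i (vupd z (Inl (Some m)) w)) has_field_derivative
    (if i = m then 2 * (z $ Inl (Some m) - z $ Inl None) / (z $ Inr (Some m) - z $ Inr None) else 0))
    (at (z $ Inl (Some m)))"
proof (cases "i = m")
  case True
  then show ?thesis using d3[OF assms, of "z $ Inl None" "z $ Inl (Some m)"]
    by (simp add: pow_base_def vupd_def)
next
  case False
  then show ?thesis by (simp add: pow_base_def vupd_def)
qed

lemma xi_none_deriv:
  fixes z :: "complex^('n::finite option + 'n option)"
  assumes nz: "\<forall>i. z $ Inl (Some i) \<noteq> z $ Inl None"
  shows "((\<lambda>w. xi_map (vupd z (Inl None) w)) has_derivative
    (\<lambda>h. cscale h (\<chi> b. case b of Inl i \<Rightarrow> - (z $ Inr (Some i) - z $ Inr None) / (z $ Inl (Some i) - z $ Inl None)^2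
                                | Inr i \<Rightarrow> 0)))
    (at (z $ Inl None))"
proof (rule vec_deriv)
  fix b :: "'n + 'n"
  show "((\<lambda>w. xi_map (vupd z (Inl None) w) $ b) has_field_derivative
    (\<chi> b. case b of Inl i \<Rightarrow> - (z $ Inr (Some i) - z $ Inr None) / (z $ Inl (Some i) - z $ Inl None)^2
                                | Inr i \<Rightarrow> 0) $ b)
    (at (z $ Inl None))"
  proof (cases b)
    case (Inl i)
    have "z $ Inl (Some i) \<noteq> z $ Inl None" using nz by simp
    then show ?thesis using Inl d2[of "z $ Inl (Some i)" "z $ Inl None" "z $ Inr (Some i) - z $ Inr None"]
      by (simp add: xi_map_def vupd_def)
  next
    case (Inr i)
    then show ?thesis by (simp add: xi_map_def vupd_def)
  qed
qed

lemma pb_none_deriv: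
  fixes z :: "complex^('n::finite option + 'n option)"
  assumes "z $ Inr (Some i) - z $ Inr None \<noteq> 0"
  shows "((\<lambda>w. pow_base i (vupd z (Inl None) w)) has_field_derivative
    - 2 * (z $ Inl (Some i) - z $ Inl None) / (z $ Inr (Some i) - z $ Inr None))
    (at (z $ Inl None))"
  using d4[OF assms, of "z $ Inl (Some i)" "z $ Inl None"] by (simp add: pow_base_def vupd_def)



theorem mainTheorem8:
  fixes chi :: "'n::finite \<Rightarrow> complex"
    and \<Psi> :: "complex ^ ('n + 'n) \<Rightarrow> complex"
    and D :: "(complex ^ ('n + 'n)) set"
    and U :: "(complex ^ ('n option + 'n option)) set"
    and Lg :: "'n \<Rightarrow> complex ^ ('n option + 'n option) \<Rightarrow> complex"
    and k :: complex
  assumes holo: "cholomorphic_on \<Psi> D"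
    and ward_h: "\<forall>z\<in>D. (\<Sum>i\<in>UNIV. - 2 * z $ Inl i * partial \<Psi> (Inl i) z + 2 * chi i * \<Psi> z) = 0"
    and ward_e: "\<forall>z\<in>D. (\<Sum>i\<in>UNIV. partial \<Psi> (Inl i) z) = 0"
    and ward_f: "\<forall>z\<in>D. (\<Sum>i\<in>UNIV. - ((z $ Inl i) ^ 2) * partial \<Psi> (Inl i) z
                                   + 2 * chi i * z $ Inl i * \<Psi> z) = 0"
    and U_open: "open U" and U_sc: "simply_connected U"
    and U_x: "\<forall>z\<in>U. \<forall>i. z $ Inl (Some i) \<noteq> z $ Inl None"
    and U_t: "\<forall>z\<in>U. \<forall>i. z $ Inr (Some i) \<noteq> z $ Inr None"
    and U_D: "\<forall>z\<in>U. xi_map z \<in> D"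
    and Lg_holo: "\<forall>i. cholomorphic_on (Lg i) U"
    and Lg_branch: "\<forall>i. \<forall>z\<in>U. exp (Lg i z) = pow_base i z"
  shows "\<forall>z\<in>U.
      (\<Sum>j\<in>UNIV. partial (Upsilon chi Lg \<Psi>) (Inl j) z) = 0
    \<and> (\<Sum>j\<in>UNIV. z $ Inr j * partial (Upsilon chi Lg \<Psi>) (Inl j) z) = 0
    \<and> (\<Sum>j\<in>UNIV. - 2 * z $ Inl j * partial (Upsilon chi Lg \<Psi>) (Inl j) z
          + 2 * (case j of Some i \<Rightarrow> chi i | None \<Rightarrow> k / 2) * Upsilon chi Lg \<Psi> z)
        - k * Upsilon chi Lg \<Psi> z = 0"
proof (intro ballI)
  fix z assume zU: "z \<in> U"
  define d where "d i = z $ Inl (Some i) - z $ Inl None" for i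
  define e where "e i = z $ Inr (Some i) - z $ Inr None" for i
  define Y where "Y = Upsilon chi Lg \<Psi> z"
  define P where "P = (\<Prod>i\<in>UNIV. exp (chi i * Lg i z))"
  define G where "G i = partial \<Psi> (Inl i) (xi_map z)" for i
  define Q where "Q = \<Psi> (xi_map z)"
  define pS where "pS m = (2 * chi m / d m) * Y + P * (e m / (d m)^2) * G m" for m
  have dnz: "d i \<noteq> 0" for i using U_x zU by (simp add: d_def)
  have enz: "e i \<noteq> 0" for i using U_t zU by (simp add: e_def)
  have YPQ: "Y = P * Q" by (simp add: Y_def P_def Q_def Upsilon_def)
  have pbz: "pow_base i z = (d i)^2 / e i" for i by (simp add: pow_base_def d_def e_def)
  have pbnz: "\<forall>i. pow_base i z \<noteq> 0" using dnz enz pbz by simp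
  have xiz: "xi_map z $ Inl i = - e i / d i" for i by (simp add: xi_map_def d_def e_def)
  have xD: "xi_map z \<in> D" using U_D zU by blast
  have enz0: "z $ Inr (Some i) - z $ Inr None \<noteq> 0" for i using U_t zU by simp
  have pSm: "partial (Upsilon chi Lg \<Psi>) (Inl (Some m)) z = pS m" for m
  proof -
    have "partial (Upsilon chi Lg \<Psi>) (Inl (Some m)) z =
      (\<Sum>i\<in>UNIV. chi i * ((if i = m then 2 * d m / e m else 0) / pow_base i z)) * Y
     + P * (\<Sum>a\<in>UNIV. axis (Inl m) (e m / (d m)^2) $ a * partial \<Psi> a (xi_map z))"
      unfolding Y_def P_def d_def e_def
      by (rule ups_partial[OF holo xD zU Lg_holo Lg_branch xi_some_deriv pb_some_deriv[OF enz0] pbnz])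
        (use U_x zU in blast)
    also have "(\<Sum>i\<in>UNIV. chi i * ((if i = m then 2 * d m / e m else 0) / pow_base i z))
        = (\<Sum>i\<in>UNIV. if i = m then 2 * chi m / d m else 0)"
      by (rule sum.cong) (auto simp: pbz dnz enz power2_eq_square field_simps)
    also have "(\<Sum>a\<in>UNIV. axis (Inl m) (e m / (d m)^2) $ a * partial \<Psi> a (xi_map z))
        = (\<Sum>a\<in>UNIV. if a = (Inl m :: 'n + 'n) then e m / (d m)^2 * G m else 0)"
      by (rule sum.cong) (auto simp: axis_def G_def)
    finally show ?thesis by (simp add: pS_def)
  qed
  have p0: "partial (Upsilon chi Lg \<Psi>) (Inl None) z = - (\<Sum>m\<in>UNIV. pS m)"
  proof -
    have "partial (Upsilon chi Lg \<Psi>) (Inl None) z =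
      (\<Sum>i\<in>UNIV. chi i * ((- 2 * d i / e i) / pow_base i z)) * Y
     + P * (\<Sum>a\<in>UNIV. (\<chi> b. case b of Inl i \<Rightarrow> - e i / (d i)^2 | Inr i \<Rightarrow> 0) $ a * partial \<Psi> a (xi_map z))"
      unfolding Y_def P_def d_def e_def
      by (rule ups_partial[OF holo xD zU Lg_holo Lg_branch xi_none_deriv pb_none_deriv[OF enz0] pbnz])
        (use U_x zU in blast)
    also have "(\<Sum>i\<in>UNIV. chi i * ((- 2 * d i / e i) / pow_base i z)) = (\<Sum>i\<in>UNIV. - (2 * chi i / d i))"
      by (rule sum.cong) (auto simp: pbz dnz enz power2_eq_square field_simps)
    also have "(\<Sum>a\<in>UNIV. (\<chi> b. case b of Inl i \<Rightarrow> - e i / (d i)^2 | Inr i \<Rightarrow> 0) $ a * partial \<Psi> a (xi_map z))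
        = (\<Sum>i\<in>UNIV. - (e i / (d i)^2 * G i))"
      by (subst sum_plus) (simp add: G_def)
    finally show ?thesis
      by (simp add: pS_def sum.distrib sum_distrib_left sum_distrib_right sum_negf algebra_simps)
  qed
  have wf: "(\<Sum>i\<in>UNIV. - ((e i / d i) ^ 2) * G i - 2 * chi i * (e i / d i) * Q) = 0"
  proof -
    have "(\<Sum>i\<in>UNIV. - ((xi_map z $ Inl i) ^ 2) * partial \<Psi> (Inl i) (xi_map z)
                                   + 2 * chi i * xi_map z $ Inl i * \<Psi> (xi_map z)) = 0"
      using ward_f xD by blast
    moreover have "(\<Sum>i\<in>UNIV. - ((xi_map z $ Inl i) ^ 2) * partial \<Psi> (Inl i) (xi_map z)
                                   + 2 * chi i * xi_map z $ Inl i * \<Psi> (xi_map z))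
      = (\<Sum>i\<in>UNIV. - ((e i / d i) ^ 2) * G i - 2 * chi i * (e i / d i) * Q)"
      by (rule sum.cong) (simp_all add: xiz G_def Q_def)
    ultimately show ?thesis by simp
  qed
  have wh: "(\<Sum>i\<in>UNIV. 2 * (e i / d i) * G i + 2 * chi i * Q) = 0"
  proof -
    have "(\<Sum>i\<in>UNIV. - 2 * xi_map z $ Inl i * partial \<Psi> (Inl i) (xi_map z) + 2 * chi i * \<Psi> (xi_map z)) = 0"
      using ward_h xD by blast
    moreover have "(\<Sum>i\<in>UNIV. - 2 * xi_map z $ Inl i * partial \<Psi> (Inl i) (xi_map z) + 2 * chi i * \<Psi> (xi_map z))
      = (\<Sum>i\<in>UNIV. 2 * (e i / d i) * G i + 2 * chi i * Q)"
      by (rule sum.cong) (simp_all add: xiz G_def Q_def)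
    ultimately show ?thesis by simp
  qed
  show "(\<Sum>j\<in>UNIV. partial (Upsilon chi Lg \<Psi>) (Inl j) z) = 0
    \<and> (\<Sum>j\<in>UNIV. z $ Inr j * partial (Upsilon chi Lg \<Psi>) (Inl j) z) = 0
    \<and> (\<Sum>j\<in>UNIV. - 2 * z $ Inl j * partial (Upsilon chi Lg \<Psi>) (Inl j) z
          + 2 * (case j of Some i \<Rightarrow> chi i | None \<Rightarrow> k / 2) * Upsilon chi Lg \<Psi> z)
        - k * Upsilon chi Lg \<Psi> z = 0"
  proof (intro conjI)
    show "(\<Sum>j\<in>UNIV. partial (Upsilon chi Lg \<Psi>) (Inl j) z) = 0"
      by (subst sum_option) (simp add: p0 pSm)
    have "(\<Sum>j\<in>UNIV. z $ Inr j * partial (Upsilon chi Lg \<Psi>) (Inl j) z)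
        = (\<Sum>m\<in>UNIV. e m * pS m)"
    proof -
      have h2: "(\<Sum>m\<in>UNIV. e m * pS m) = (\<Sum>m\<in>UNIV. z $ Inr (Some m) * pS m) - z $ Inr None * (\<Sum>m\<in>UNIV. pS m)"
        by (simp add: e_def left_diff_distrib sum_subtractf sum_distrib_left)
      show ?thesis by (subst sum_option) (simp add: p0 pSm h2)
    qed
    also have "\<dots> = (- P) * (\<Sum>i\<in>UNIV. - ((e i / d i) ^ 2) * G i - 2 * chi i * (e i / d i) * Q)"
      unfolding sum_distrib_left
      by (rule sum.cong) (auto simp: pS_def YPQ dnz power2_eq_square field_simps)
    also have "\<dots> = 0" using wf by simp
    finally show "(\<Sum>j\<in>UNIV. z $ Inr j * partial (Upsilon chi Lg \<Psi>) (Inl j) z) = 0" .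
    have "(\<Sum>j\<in>UNIV. - 2 * z $ Inl j * partial (Upsilon chi Lg \<Psi>) (Inl j) z
          + 2 * (case j of Some i \<Rightarrow> chi i | None \<Rightarrow> k / 2) * Upsilon chi Lg \<Psi> z)
        - k * Upsilon chi Lg \<Psi> z = (\<Sum>m\<in>UNIV. - 2 * d m * pS m + 2 * chi m * Y)"
    proof -
      have h3: "(\<Sum>m\<in>UNIV. - 2 * d m * pS m + 2 * chi m * Y) = (\<Sum>m\<in>UNIV. - 2 * z $ Inl (Some m) * pS m + 2 * chi m * Y) + 2 * z $ Inl None * (\<Sum>m\<in>UNIV. pS m)"
        by (simp add: d_def algebra_simps sum.distrib sum_subtractf sum_distrib_left sum_distrib_right)
      have h4: "(\<Sum>j\<in>UNIV. - 2 * z $ Inl j * partial (Upsilon chi Lg \<Psi>) (Inl j) z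
          + 2 * (case j of Some i \<Rightarrow> chi i | None \<Rightarrow> k / 2) * Upsilon chi Lg \<Psi> z)
        - k * Upsilon chi Lg \<Psi> z = (\<Sum>m\<in>UNIV. - 2 * z $ Inl (Some m) * pS m + 2 * chi m * Y) + 2 * z $ Inl None * (\<Sum>m\<in>UNIV. pS m)"
        by (subst sum_option) (simp add: p0 pSm Y_def algebra_simps)
      show ?thesis using h3 h4 by simp
    qed
    also have "\<dots> = (- P) * (\<Sum>i\<in>UNIV. 2 * (e i / d i) * G i + 2 * chi i * Q)"
      unfolding sum_distrib_left
      by (rule sum.cong) (auto simp: pS_def YPQ dnz power2_eq_square field_simps)
    also have "\<dots> = 0" using wh by simp
    finally show "(\<Sum>j\<in>UNIV. - 2 * z $ Inl j * partial (Upsilon chi Lg \<Psi>) (Inl j) z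
          + 2 * (case j of Some i \<Rightarrow> chi i | None \<Rightarrow> k / 2) * Upsilon chi Lg \<Psi> z)
        - k * Upsilon chi Lg \<Psi> z = 0" .
  qed
qed

end
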